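(* Let $m\ge 2$, let $\delta_1,\ldots,\delta_m\in\mathbb{R}\setminus\{0\}$ be pairwise distinct, and let $g\in L^1(\mathbb{R})$ be the function with Fourier transform $\hat g(\xi)=\prod_{k=1}^m(1+2\pi j\delta_k\xi)^{-1}$. Let $\alpha>0$. Then for all $x\in[0,\alpha)$ and $\xi\in[0,1/\alpha)$, $$Z_\alpha g(x,\xi)=\sum_{i=1}^m \frac{1}{\delta_i}\,\frac{e^{-x/\delta_i}}{1-e^{-\alpha(1/\delta_i+2\pi j\xi)}}\cdot\prod_{k=1,k\neq i}^m\left(1-\frac{\delta_k}{\delta_i}\right)^{-1}.$$
   Context: $j$ is the imaginary unit and $\hat g(\xi)=\int g(x)e^{-2\pi jx\xi}dx$. For $f\in L^2(\mathbb{R})$ and $\alpha>0$ the Zak transform is $Z_\alpha f(x,\xi)=\sum_{k\in\mathbb{Z}} f(x-\alpha k)e^{2\pi j\alpha k\xi}$, $x,\xi\in\mathbb{R}$. Such a $g$ (totally positive of finite type $m\ge2$) is continuous with exponential decay, so $Z_\alpha g$ is continuous. *)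

theory Defs
  imports "HOL-Analysis.Analysis"
begin

definition fourier_transform :: "(real \<Rightarrow> complex) \<Rightarrow> real \<Rightarrow> complex" where
  "fourier_transform g \<xi> =
     (LINT x|lborel. g x * exp (- (2 * complex_of_real pi * \<i> * complex_of_real x * complex_of_real \<xi>)))"

definition zak_transform :: "real \<Rightarrow> (real \<Rightarrow> complex) \<Rightarrow> real \<Rightarrow> real \<Rightarrow> complex" where
  "zak_transform \<alpha> f x \<xi> =
     infsum (\<lambda>k::int. f (x - \<alpha> * real_of_int k) *
        exp (2 * complex_of_real pi * \<i> * complex_of_real (\<alpha> * real_of_int k * \<xi>))) UNIV"

end

theory Submission
  imports Defs "HOL-Probability.Probability"
begin


lemma real_fourier_unique:
  fixes u :: "real \<Rightarrow> real"
  assumes u: "integrable lborel u"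
    and z: "\<And>t. (CLINT x|lborel. u x *\<^sub>R iexp (t * x)) = 0"
  shows "AE x in lborel. u x = 0"
proof -
  have [measurable]: "u \<in> borel_measurable borel" using u by auto
  define p where "p = (\<lambda>x. max (u x) 0)"
  define q where "q = (\<lambda>x. max (- u x) 0)"
  have pi: "integrable lborel p" unfolding p_def using u by auto
  have qi: "integrable lborel q" unfolding q_def using u by auto
  have [measurable]: "p \<in> borel_measurable borel" "q \<in> borel_measurable borel"
    unfolding p_def q_def by auto
  have upq: "u x = p x - q x" for x unfolding p_def q_def by auto
  have "(CLINT x|lborel. u x *\<^sub>R iexp (0 * x)) = complex_of_real (LINT x|lborel. u x)"
    using u by (simp add: of_real_def)
  then have "(LINT x|lborel. u x) = 0" using z[of 0] by simp
  then have pq: "(LINT x|lborel. p x) = (LINT x|lborel. q x)"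
    using pi qi by (simp add: upq Bochner_Integration.integral_diff)
  have p0: "\<And>x. p x \<ge> 0" and q0: "\<And>x. q x \<ge> 0" unfolding p_def q_def by auto
  define c where "c = (LINT x|lborel. p x)"
  have c0: "c \<ge> 0" unfolding c_def using p0 by (simp add: integral_nonneg_AE)
  have "AE x in lborel. p x = q x"
  proof (cases "c = 0")
    case True
    have "AE x in lborel. p x = 0"
      using integral_nonneg_eq_0_iff_AE[OF pi] p0 True c_def by auto
    moreover have "AE x in lborel. q x = 0"
      using integral_nonneg_eq_0_iff_AE[OF qi] q0 True c_def pq by auto
    ultimately show ?thesis by eventually_elim auto
  next
    case False
    with c0 have cpos: "c > 0" by simp
    define M1 where "M1 = density lborel (\<lambda>x. ennreal (p x / c))"
    define M2 where "M2 = density lborel (\<lambda>x. ennreal (q x / c))"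
    have ip: "integrable lborel (\<lambda>x. p x / c)" using pi by auto
    have iq: "integrable lborel (\<lambda>x. q x / c)" using qi by auto
    have d1: "real_distribution M1"
    proof -
      have "emeasure M1 (space M1) = (\<integral>\<^sup>+x. ennreal (p x / c) \<partial>lborel)"
        unfolding M1_def by (simp add: emeasure_density)
      also have "\<dots> = ennreal (LINT x|lborel. p x / c)"
        using ip p0 cpos by (intro nn_integral_eq_integral) auto
      also have "\<dots> = 1" using cpos by (simp add: c_def)
      finally have "prob_space M1" by (intro prob_spaceI)
      then show ?thesis unfolding real_distribution_def real_distribution_axioms_def M1_def by simp
    qed
    have d2: "real_distribution M2"
    proof -
      have "emeasure M2 (space M2) = (\<integral>\<^sup>+x. ennreal (q x / c) \<partial>lborel)"
        unfolding M2_def by (simp add: emeasure_density)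
      also have "\<dots> = ennreal (LINT x|lborel. q x / c)"
        using iq q0 cpos by (intro nn_integral_eq_integral) auto
      also have "\<dots> = 1" using cpos pq by (simp add: c_def)
      finally have "prob_space M2" by (intro prob_spaceI)
      then show ?thesis unfolding real_distribution_def real_distribution_axioms_def M2_def by simp
    qed
    have "char M1 = char M2"
    proof
      fix t
      have ib: "integrable lborel (\<lambda>x. r x *\<^sub>R iexp (t * x))" if "integrable lborel r" for r
      proof (rule Bochner_Integration.integrable_bound[OF that])
        have [measurable]: "r \<in> borel_measurable lborel" using that by auto
        show "(\<lambda>x. r x *\<^sub>R iexp (t * x)) \<in> borel_measurable lborel" by measurable
      qed auto
      have "char M1 t = (CLINT x|lborel. (p x / c) *\<^sub>R iexp (t * x))"
        unfolding char_def M1_def using p0 cpos by (subst integral_density) auto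
      also have "\<dots> = (CLINT x|lborel. (q x / c) *\<^sub>R iexp (t * x)) + (CLINT x|lborel. (u x / c) *\<^sub>R iexp (t * x))"
        using ib[OF ip] ib[OF iq] ib[of "\<lambda>x. u x / c"] u
        by (subst Bochner_Integration.integral_add[symmetric]) (auto simp: upq diff_divide_distrib scaleR_diff_left)
      also have "(CLINT x|lborel. (u x / c) *\<^sub>R iexp (t * x)) = (1/c) *\<^sub>R (CLINT x|lborel. u x *\<^sub>R iexp (t * x))"
        by (subst integral_scaleR_right[symmetric]) (rule Bochner_Integration.integral_cong, simp_all)
      also have "\<dots> = 0" using z by simp
      also have "(CLINT x|lborel. (q x / c) *\<^sub>R iexp (t * x)) = char M2 t"
        unfolding char_def M2_def using q0 cpos by (subst integral_density) auto
      finally show "char M1 t = char M2 t" by simp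
    qed
    then have "M1 = M2" using Levy_uniqueness d1 d2 by blast
    then have "AE x in lborel. ennreal (p x / c) = ennreal (q x / c)"
      unfolding M1_def M2_def by (intro sigma_finite_measure.density_unique[OF sigma_finite_lborel]) auto
    then show ?thesis
    proof eventually_elim
      case (elim x)
      then have "p x / c = q x / c" using p0[of x] q0[of x] cpos by (simp add: ennreal_inj)
      then show ?case using cpos by (simp add: divide_cancel_right)
    qed
  qed
  then show ?thesis by eventually_elim (simp add: upq)
qed
lemma integrable_mult_iexp:
  fixes f :: "real \<Rightarrow> complex"
  assumes f: "integrable lborel f"
  shows "integrable lborel (\<lambda>x. f x * iexp (t * x))"
proof (rule Bochner_Integration.integrable_bound[OF f])
  have [measurable]: "f \<in> borel_measurable lborel" using f by auto
  show "(\<lambda>x. f x * iexp (t * x)) \<in> borel_measurable lborel" by measurable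
qed (auto simp: norm_mult)

lemma fourier_unique:
  fixes f :: "real \<Rightarrow> complex"
  assumes f: "integrable lborel f" and z: "\<And>\<xi>. fourier_transform f \<xi> = 0"
  shows "AE x in lborel. f x = 0"
proof -
  have H: "(CLINT x|lborel. f x * iexp (t * x)) = 0" for t
  proof -
    have "(CLINT x|lborel. f x * iexp (t * x)) = fourier_transform f (- t / (2 * pi))"
      unfolding fourier_transform_def
      by (rule Bochner_Integration.integral_cong) (auto simp: field_simps)
    then show ?thesis using z by simp
  qed
  have fc: "integrable lborel (\<lambda>x. cnj (f x))" using f by simp
  have H2: "(CLINT x|lborel. cnj (f x) * iexp (t * x)) = 0" for t
  proof -
    have "(CLINT x|lborel. cnj (f x) * iexp (t * x)) = (CLINT x|lborel. cnj (f x * iexp ((-t) * x)))"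
      by (rule Bochner_Integration.integral_cong) (auto simp: exp_cnj)
    also have "\<dots> = cnj (CLINT x|lborel. f x * iexp ((-t) * x))" by (rule Bochner_Integration.integral_cnj)
    finally show ?thesis using H[of "-t"] by simp
  qed
  have i1: "integrable lborel (\<lambda>x. f x * iexp (t * x))" for t by (rule integrable_mult_iexp[OF f])
  have i2: "integrable lborel (\<lambda>x. cnj (f x) * iexp (t * x))" for t by (rule integrable_mult_iexp[OF fc])
  have re: "AE x in lborel. Re (f x) = 0"
  proof (rule real_fourier_unique)
    show "integrable lborel (\<lambda>x. Re (f x))" using f by simp
    fix t
    have "(CLINT x|lborel. Re (f x) *\<^sub>R iexp (t * x)) =
        (CLINT x|lborel. (1/2) * (f x * iexp (t * x)) + (1/2) * (cnj (f x) * iexp (t * x)))"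
      by (rule Bochner_Integration.integral_cong) (auto simp: complex_eq_iff field_simps)
    also have "\<dots> = 0" using i1 i2 H H2 by simp
    finally show "(CLINT x|lborel. Re (f x) *\<^sub>R iexp (t * x)) = 0" .
  qed
  have im: "AE x in lborel. Im (f x) = 0"
  proof (rule real_fourier_unique)
    show "integrable lborel (\<lambda>x. Im (f x))" using f by simp
    fix t
    have "(CLINT x|lborel. Im (f x) *\<^sub>R iexp (t * x)) =
        (CLINT x|lborel. (-\<i>/2) * (f x * iexp (t * x)) + (\<i>/2) * (cnj (f x) * iexp (t * x)))"
      by (rule Bochner_Integration.integral_cong) (auto simp: complex_eq_iff field_simps)
    also have "\<dots> = 0" using i1 i2 H H2 by simp
    finally show "(CLINT x|lborel. Im (f x) *\<^sub>R iexp (t * x)) = 0" .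
  qed
  from re im show ?thesis by eventually_elim (simp add: complex_eq_iff)
qed


lemma pf_step:
  fixes a di dj C :: complex
  assumes "di \<noteq> 0" "dj \<noteq> 0" "di \<noteq> dj" "1 + a * di \<noteq> 0" "1 + a * dj \<noteq> 0"
  shows "C * (1 / (1 - dj / di)) / (1 + a * di) + C / (1 - di / dj) / (1 + a * dj)
     = C / (1 + a * di) / (1 + a * dj)"
proof -
  have e1: "1 / (1 - dj / di) = di / (di - dj)" using assms by (simp add: field_simps)
  have e2: "1 / (1 - di / dj) = - dj / (di - dj)" using assms by (simp add: field_simps)
  have d: "di - dj \<noteq> 0" using assms by simp
  have "C * (1 / (1 - dj / di)) / (1 + a * di) + C / (1 - di / dj) / (1 + a * dj)
     = C * (di * (1 + a * dj) - dj * (1 + a * di)) / ((di - dj) * (1 + a * di) * (1 + a * dj))"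
    using e1 e2 e2[symmetric] assms d
    by (simp add: divide_simps) (simp add: algebra_simps)
  also have "di * (1 + a * dj) - dj * (1 + a * di) = di - dj" by (simp add: algebra_simps)
  finally show ?thesis using d by simp
qed

lemma partial_fractions:
  fixes d :: "nat \<Rightarrow> complex"
  assumes "finite S" "S \<noteq> {}" "\<forall>k\<in>S. d k \<noteq> 0" "inj_on d S"
  shows "\<forall>a. (\<forall>k\<in>S. 1 + a * d k \<noteq> 0) \<longrightarrow>
    (\<Prod>k\<in>S. 1 / (1 + a * d k)) = (\<Sum>i\<in>S. (\<Prod>k\<in>S - {i}. 1 / (1 - d k / d i)) / (1 + a * d i))"
  using assms
proof (induction S rule: finite_ne_induct)
  case (singleton x)
  then show ?case by simp
next
  case (insert j S)
  show ?case
  proof (intro allI impI)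
    fix a assume a: "\<forall>k\<in>insert j S. 1 + a * d k \<noteq> 0"
    have dnz: "\<forall>k\<in>S. d k \<noteq> 0" and dj: "d j \<noteq> 0" using insert by auto
    have inj: "inj_on d S" using insert by (auto simp: inj_on_def)
    have ne: "\<And>k. k \<in> S \<Longrightarrow> d k \<noteq> d j" using insert.prems(2) insert.hyps by (auto simp: inj_on_def)
    define C where "C i = (\<Prod>k\<in>S - {i}. 1 / (1 - d k / d i))" for i
    have IH: "\<And>b. (\<forall>k\<in>S. 1 + b * d k \<noteq> 0) \<Longrightarrow>
       (\<Prod>k\<in>S. 1 / (1 + b * d k)) = (\<Sum>i\<in>S. C i / (1 + b * d i))"
      using insert.IH dnz inj unfolding C_def by blast
    have IHj: "(\<Prod>k\<in>S. 1 / (1 - d k / d j)) = (\<Sum>i\<in>S. C i / (1 - d i / d j))"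
    proof -
      have "\<forall>k\<in>S. 1 + (- 1 / d j) * d k \<noteq> 0"
      proof
        fix k assume "k \<in> S"
        then have "d j - d k \<noteq> 0" using ne by force
        moreover have "1 + (- 1 / d j) * d k = (d j - d k) / d j" using dj by (simp add: field_simps)
        ultimately show "1 + (- 1 / d j) * d k \<noteq> 0" using dj by simp
      qed
      note A = this
      have eq: "\<And>k. 1 + (- 1 / d j) * d k = 1 - d k / d j" by (simp add: field_simps)
      show ?thesis using IH[of "- 1 / d j", OF A, unfolded eq] .
    qed
    have "(\<Prod>k\<in>insert j S. 1 / (1 + a * d k)) = (\<Prod>k\<in>S. 1 / (1 + a * d k)) / (1 + a * d j)"
      using insert.hyps by simp
    also have "\<dots> = (\<Sum>i\<in>S. C i / (1 + a * d i) / (1 + a * d j))"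
      using IH a by (simp add: sum_divide_distrib)
    also have "\<dots> = (\<Sum>i\<in>S. C i * (1 / (1 - d j / d i)) / (1 + a * d i) + C i / (1 - d i / d j) / (1 + a * d j))"
      using a dnz dj ne by (intro sum.cong refl pf_step[symmetric]) auto
    also have "\<dots> = (\<Sum>i\<in>S. C i * (1 / (1 - d j / d i)) / (1 + a * d i)) + (\<Prod>k\<in>S. 1 / (1 - d k / d j)) / (1 + a * d j)"
      by (simp add: sum.distrib IHj sum_divide_distrib)
    also have "\<dots> = (\<Sum>i\<in>insert j S. (\<Prod>k\<in>insert j S - {i}. 1 / (1 - d k / d i)) / (1 + a * d i))"
    proof -
      have "(\<Prod>k\<in>insert j S - {i}. 1 / (1 - d k / d i)) = C i * (1 / (1 - d j / d i))" if "i \<in> S" for i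
      proof -
        have "insert j S - {i} = insert j (S - {i})" using that insert.hyps by auto
        then show ?thesis unfolding C_def using insert.hyps by (simp add: mult.commute)
      qed
      moreover have "insert j S - {j} = S" using insert.hyps by auto
      ultimately show ?thesis using insert.hyps by (simp add: add.commute)
    qed
    finally show "(\<Prod>k\<in>insert j S. 1 / (1 + a * d k)) = (\<Sum>i\<in>insert j S. (\<Prod>k\<in>insert j S - {i}. 1 / (1 - d k / d i)) / (1 + a * d i))" .
  qed
qed


lemma exp_pos_integral:
  fixes w :: complex
  assumes a: "Re w > 0"
  shows "integrable lborel (\<lambda>x::real. if 0 \<le> x then exp (- (w * of_real x)) else 0)"
    and "(LINT x|lborel. (if 0 \<le> x then exp (- (w * of_real x)) else 0)) = 1 / w"
proof -
  define E where "E = (\<lambda>x::real. exp (- (w * of_real x)))"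
  define B where "B = (\<lambda>x::real. if x \<in> {0..} then exp (- Re w * x) else 0)"
  have "((\<lambda>x. exp (- Re w * x)) has_integral exp (- Re w * 0) / Re w) {0..}"
    using has_integral_exp_minus_to_infinity[OF a] .
  then have "(B has_integral 1 / Re w) UNIV"
    unfolding B_def by (subst has_integral_restrict_UNIV) simp
  then have "integral\<^sup>N lborel B = 1 / Re w"
    by (intro nn_integral_has_integral_lborel) (auto simp: B_def)
  then have Bi: "integrable lborel B"
    by (intro integrableI_nn_integral_finite[where x="1 / Re w"]) (auto simp: B_def)
  have [measurable]: "E \<in> borel_measurable borel" unfolding E_def by (intro borel_measurable_continuous_onI continuous_intros)
  have si: "set_integrable lborel {0..} E"
    unfolding set_integrable_def
  proof (rule Bochner_Integration.integrable_bound[OF Bi])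
    show "(\<lambda>x. indicator {0..} x *\<^sub>R E x) \<in> borel_measurable lborel" by measurable
    show "AE x in lborel. norm (indicator {0..} x *\<^sub>R E x) \<le> norm (B x)"
      by (auto simp: B_def E_def indicator_def)
  qed
  have eqf: "(\<lambda>x::real. if 0 \<le> x then E x else 0) = (\<lambda>x. indicator {0..} x *\<^sub>R E x)"
    by (auto simp: indicator_def)
  show "integrable lborel (\<lambda>x::real. if 0 \<le> x then exp (- (w * of_real x)) else 0)"
    using si unfolding set_integrable_def eqf[unfolded E_def] E_def .
  have lim1: "((\<lambda>b. LINT x:{0..b}|lborel. E x) \<longlongrightarrow> (LINT x:{0..}|lborel. E x)) at_top"
    by (rule tendsto_set_lebesgue_integral_at_top[OF _ si]) auto
  have w0: "w \<noteq> 0" using a by auto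
  have val: "(LINT x:{0..b}|lborel. E x) = (1 - E b) / w" if b: "b \<ge> 0" for b
  proof -
    have sib: "set_integrable lborel {0..b} E" by (rule set_integrable_subset[OF si]) auto
    have "(LINT x:{0..b}|lborel. E x) = integral {0..b} E"
      by (rule set_borel_integral_eq_integral(2)[OF sib])
    also have "integral {0..b} E = (- E b / w) - (- E 0 / w)"
    proof (rule integral_unique, rule fundamental_theorem_of_calculus[OF b])
      fix x :: real
      have "((\<lambda>z. - exp (- (w * z)) / w) has_field_derivative exp (- (w * of_real x))) (at (of_real x))"
      proof -
        have "((\<lambda>z. exp (- (w * z))) has_field_derivative exp (- (w * of_real x)) * (- (w * 1))) (at (of_real x))"
          by (intro DERIV_chain2[OF DERIV_exp] DERIV_minus DERIV_cmult DERIV_ident)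
        then have "((\<lambda>z. - exp (- (w * z)) / w) has_field_derivative - (exp (- (w * of_real x)) * (- (w * 1))) / w) (at (of_real x))"
          by (intro DERIV_cdivide DERIV_minus)
        then show ?thesis by (rule DERIV_cong) (use w0 in simp)
      qed
      then show "((\<lambda>x. - E x / w) has_vector_derivative E x) (at x within {0..b})"
        unfolding E_def using has_vector_derivative_real_field by blast
    qed
    also have "\<dots> = (1 - E b) / w" by (simp add: E_def diff_divide_distrib)
    finally show ?thesis .
  qed
  have "((\<lambda>b. norm (E b)) \<longlongrightarrow> 0) at_top"
  proof -
    have "(\<lambda>b. norm (E b)) = (\<lambda>b. exp (- Re w * b))" by (auto simp: E_def)
    moreover have "((\<lambda>b. exp (- Re w * b)) \<longlongrightarrow> 0) at_top"
      using a by (intro filterlim_compose[OF exp_at_bot] filterlim_tendsto_neg_mult_at_bot[OF tendsto_const _ filterlim_ident]) simp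
    ultimately show ?thesis by simp
  qed
  then have "(E \<longlongrightarrow> 0) at_top" by (simp add: tendsto_norm_zero_iff)
  then have lim2: "((\<lambda>b. (1 - E b) / w) \<longlongrightarrow> 1 / w) at_top"
  proof -
    have "((\<lambda>b. (1 - E b) / w) \<longlongrightarrow> (1 - 0) / w) at_top"
      by (intro tendsto_divide tendsto_diff tendsto_const \<open>(E \<longlongrightarrow> 0) at_top\<close> w0)
    then show ?thesis by simp
  qed
  have "eventually (\<lambda>b. (1 - E b) / w = (LINT x:{0..b}|lborel. E x)) at_top"
    by (rule eventually_mono[OF eventually_ge_at_top[of 0]]) (simp add: val)
  then have "((\<lambda>b. LINT x:{0..b}|lborel. E x) \<longlongrightarrow> 1 / w) at_top"
    by (rule Lim_transform_eventually[OF lim2])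
  then have "(LINT x:{0..}|lborel. E x) = 1 / w"
    using tendsto_unique[OF _ lim1] by simp
  then show "(LINT x|lborel. (if 0 \<le> x then exp (- (w * of_real x)) else 0)) = 1 / w"
    unfolding set_lebesgue_integral_def eqf[unfolded E_def, symmetric] E_def .
qed
lemma exp_neg_integral:
  fixes w :: complex
  assumes a: "Re w > 0"
  shows "integrable lborel (\<lambda>x::real. if x < 0 then exp (w * of_real x) else 0)"
    and "(LINT x|lborel. (if x < 0 then exp (w * of_real x) else 0)) = 1 / w"
proof -
  define f where "f = (\<lambda>x::real. if x < 0 then exp (w * of_real x) else 0)"
  define P where "P = (\<lambda>x::real. if 0 \<le> x then exp (- (w * of_real x)) else 0)"
  have [measurable]: "f \<in> borel_measurable borel" "P \<in> borel_measurable borel"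
    unfolding f_def P_def by measurable
  have ae: "AE x in lborel. f (0 + (-1) * x) = P x"
    using AE_lborel_singleton[of "0::real"] by eventually_elim (auto simp: f_def P_def)
  have "integrable lborel (\<lambda>x. f (0 + (-1) * x))"
    using integrable_cong_AE[of "\<lambda>x. f (0 + (-1) * x)" lborel P] ae exp_pos_integral(1)[OF a]
    unfolding P_def by auto
  then show "integrable lborel (\<lambda>x::real. if x < 0 then exp (w * of_real x) else 0)"
    using lborel_integrable_real_affine_iff[of "-1" f 0] unfolding f_def by simp
  have "(LINT x|lborel. f x) = \<bar>-1\<bar> *\<^sub>R (LINT x|lborel. f (0 + (-1) * x))"
    by (rule lborel_integral_real_affine) simp
  also have "\<dots> = (LINT x|lborel. P x)"
    using integral_cong_AE[of "\<lambda>x. f (0 + (-1) * x)" lborel P] ae by simp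
  also have "\<dots> = 1 / w" unfolding P_def by (rule exp_pos_integral(2)[OF a])
  finally show "(LINT x|lborel. (if x < 0 then exp (w * of_real x) else 0)) = 1 / w"
    unfolding f_def .
qed

definition gz :: "real \<Rightarrow> real \<Rightarrow> complex" where
  "gz d y = (if 0 < d then (if 0 \<le> y then complex_of_real (exp (- y / d) / d) else 0)
             else (if y < 0 then complex_of_real (- exp (- y / d) / d) else 0))"

lemma ft_gz:
  fixes d \<xi> :: real
  assumes d: "d \<noteq> 0"
  shows "integrable lborel (\<lambda>x. gz d x * exp (- (2 * complex_of_real pi * \<i> * complex_of_real x * complex_of_real \<xi>)))"
    and "(LINT x|lborel. gz d x * exp (- (2 * complex_of_real pi * \<i> * complex_of_real x * complex_of_real \<xi>)))
        = inverse (1 + 2 * complex_of_real pi * \<i> * complex_of_real (d * \<xi>))"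
proof -
  define F where "F = (\<lambda>x. gz d x * exp (- (2 * complex_of_real pi * \<i> * complex_of_real x * complex_of_real \<xi>)))"
  have "integrable lborel F \<and> (LINT x|lborel. F x) = inverse (1 + 2 * complex_of_real pi * \<i> * complex_of_real (d * \<xi>))"
  proof (cases "d > 0")
    case True
    define w where "w = complex_of_real (1 / d) + 2 * complex_of_real pi * \<i> * complex_of_real \<xi>"
    have Rw: "Re w > 0" using True by (simp add: w_def)
    have Fe: "F = (\<lambda>x. complex_of_real (1 / d) * (if 0 \<le> x then exp (- (w * of_real x)) else 0))"
    proof
      fix x
      show "F x = complex_of_real (1 / d) * (if 0 \<le> x then exp (- (w * of_real x)) else 0)"
      proof (cases "0 \<le> x")
        case True
        have e: "complex_of_real (- x / d) + - (2 * complex_of_real pi * \<i> * complex_of_real x * complex_of_real \<xi>) = - (w * of_real x)"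
          using \<open>d > 0\<close> by (simp add: w_def field_simps)
        have "F x = complex_of_real (1 / d) * (exp (complex_of_real (- x / d)) * exp (- (2 * complex_of_real pi * \<i> * complex_of_real x * complex_of_real \<xi>)))"
          using True \<open>d > 0\<close> unfolding F_def gz_def by (simp add: exp_of_real[symmetric] divide_inverse mult.commute)
        also have "\<dots> = complex_of_real (1 / d) * exp (- (w * of_real x))"
          by (simp only: exp_add[symmetric] e)
        finally show ?thesis using True by simp
      qed (use \<open>d > 0\<close> in \<open>simp add: F_def gz_def\<close>)
    qed
    have wd: "complex_of_real (1 / d) * (1 / w) = inverse (1 + 2 * complex_of_real pi * \<i> * complex_of_real (d * \<xi>))"
    proof -
      have "w \<noteq> 0" using Rw by auto
      moreover have "complex_of_real d * w = 1 + 2 * complex_of_real pi * \<i> * complex_of_real (d * \<xi>)"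
        using True by (simp add: w_def field_simps)
      ultimately show ?thesis using True
        by (metis divide_inverse inverse_mult_distrib mult.commute mult_1 of_real_divide of_real_1)
    qed
    show ?thesis unfolding Fe using exp_pos_integral[OF Rw] wd by (simp add: ac_simps)
  next
    case False
    with d have dn: "d < 0" by simp
    define w where "w = complex_of_real (- 1 / d) - 2 * complex_of_real pi * \<i> * complex_of_real \<xi>"
    have Rw: "Re w > 0" using dn by (simp add: w_def divide_neg_neg)
    have Fe: "F = (\<lambda>x. complex_of_real (- 1 / d) * (if x < 0 then exp (w * of_real x) else 0))"
    proof
      fix x
      show "F x = complex_of_real (- 1 / d) * (if x < 0 then exp (w * of_real x) else 0)"
      proof (cases "x < 0")
        case True
        have e: "complex_of_real (- x / d) + - (2 * complex_of_real pi * \<i> * complex_of_real x * complex_of_real \<xi>) = w * of_real x"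
          using dn by (simp add: w_def field_simps)
        have "F x = complex_of_real (- 1 / d) * (exp (complex_of_real (- x / d)) * exp (- (2 * complex_of_real pi * \<i> * complex_of_real x * complex_of_real \<xi>)))"
          using True dn unfolding F_def gz_def by (simp add: exp_of_real[symmetric] divide_inverse mult.commute)
        also have "\<dots> = complex_of_real (- 1 / d) * exp (w * of_real x)"
          by (simp only: exp_add[symmetric] e)
        finally show ?thesis using True by simp
      qed (use dn in \<open>simp add: F_def gz_def\<close>)
    qed
    have wd: "complex_of_real (- 1 / d) * (1 / w) = inverse (1 + 2 * complex_of_real pi * \<i> * complex_of_real (d * \<xi>))"
    proof -
      have "w \<noteq> 0" using Rw by auto
      moreover have "complex_of_real (- d) * w = 1 + 2 * complex_of_real pi * \<i> * complex_of_real (d * \<xi>)"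
        using dn by (simp add: w_def field_simps)
      ultimately show ?thesis using dn
        by (metis divide_inverse inverse_mult_distrib mult.commute mult_1 of_real_divide of_real_1 of_real_minus minus_divide_left minus_divide_right)
    qed
    show ?thesis unfolding Fe using exp_neg_integral[OF Rw] wd by (simp add: ac_simps)
  qed
  then show "integrable lborel (\<lambda>x. gz d x * exp (- (2 * complex_of_real pi * \<i> * complex_of_real x * complex_of_real \<xi>)))"
    and "(LINT x|lborel. gz d x * exp (- (2 * complex_of_real pi * \<i> * complex_of_real x * complex_of_real \<xi>)))
        = inverse (1 + 2 * complex_of_real pi * \<i> * complex_of_real (d * \<xi>))"
    unfolding F_def by auto
qed


lemma has_sum_geometric0:
  fixes z :: complex
  assumes "norm z < 1"
  shows "((\<lambda>n. z ^ n) has_sum (1 / (1 - z))) (UNIV :: nat set)"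
  using assms by (intro norm_summable_imp_has_sum geometric_sums) (auto simp: norm_power intro!: summable_geometric)

lemma zak_gz:
  fixes d \<alpha> x \<xi> :: real
  assumes d: "d \<noteq> 0" and \<alpha>: "\<alpha> > 0" and x: "0 \<le> x" "x < \<alpha>"
  shows "((\<lambda>k::int. gz d (x - \<alpha> * real_of_int k) *
        exp (2 * complex_of_real pi * \<i> * complex_of_real (\<alpha> * real_of_int k * \<xi>))) has_sum
      (complex_of_real (1 / d) *
          (complex_of_real (exp (- x / d)) /
             (1 - exp (- (complex_of_real \<alpha> * (complex_of_real (1 / d) + 2 * complex_of_real pi * \<i> * complex_of_real \<xi>))))))) UNIV"
    (is "(?T has_sum _) _")
proof -
  define w where "w = complex_of_real (1 / d) + 2 * complex_of_real pi * \<i> * complex_of_real \<xi>"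
  define z where "z = exp (- (complex_of_real \<alpha> * w))"
  define c where "c = complex_of_real (1 / d) * exp (complex_of_real (- x / d))"
  have Ty: "?T k = (if x - \<alpha> * real_of_int k \<in> (if 0 < d then {0..} else {..<0}) then
      complex_of_real (sgn d / d) * exp (complex_of_real (- (x - \<alpha> * real_of_int k) / d) +
        2 * complex_of_real pi * \<i> * complex_of_real (\<alpha> * real_of_int k * \<xi>)) else 0)" for k
    using d by (auto simp: gz_def exp_add exp_of_real[symmetric] sgn_if)
  show ?thesis
  proof (cases "d > 0")
    case True
    have nz: "norm z < 1" using True \<alpha> by (simp add: z_def w_def)
    have "((\<lambda>n. c * z ^ n) has_sum (c * (1 / (1 - z)))) (UNIV :: nat set)"
      by (intro has_sum_cmult_right has_sum_geometric0 nz)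
    also have "?this \<longleftrightarrow> (?T has_sum (c * (1 / (1 - z)))) {k. k \<le> 0}"
    proof (rule has_sum_reindex_bij_witness[of _ "\<lambda>k. nat (- k)" "\<lambda>n. - int n"])
      fix n :: nat
      have ex: "complex_of_real (- (x - \<alpha> * real_of_int (- int n)) / d) +
          2 * complex_of_real pi * \<i> * complex_of_real (\<alpha> * real_of_int (- int n) * \<xi>)
          = complex_of_real (- x / d) + of_nat n * (- (complex_of_real \<alpha> * w))"
        using True by (simp add: w_def field_simps)
      have cond: "x - \<alpha> * real_of_int (- int n) \<in> (if 0 < d then {0..} else {..<0})"
        using True x \<alpha> by simp
      have "?T (- int n) = complex_of_real (sgn d / d) * exp (complex_of_real (- (x - \<alpha> * real_of_int (- int n)) / d) +
          2 * complex_of_real pi * \<i> * complex_of_real (\<alpha> * real_of_int (- int n) * \<xi>))"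
        using Ty[of "- int n", unfolded if_P[OF cond]] .
      also have "\<dots> = complex_of_real (1 / d) * exp (complex_of_real (- x / d) + of_nat n * (- (complex_of_real \<alpha> * w)))"
        by (subst ex) (simp add: True)
      also have "\<dots> = c * z ^ n"
        by (simp only: c_def z_def exp_add exp_of_nat_mult mult.assoc)
      finally show "?T (- int n) = c * z ^ n" .
    qed auto
    also have "\<dots> \<longleftrightarrow> (?T has_sum (c * (1 / (1 - z)))) UNIV"
    proof (rule has_sum_cong_neutral)
      fix k :: int assume "k \<in> UNIV - {k. k \<le> 0}"
      then have "k \<ge> 1" by simp
      then have "\<alpha> * real_of_int k \<ge> \<alpha>" using \<alpha> by simp
      then have "\<not> (0 \<le> x - \<alpha> * real_of_int k)" using x by linarith
      then show "?T k = 0" using True by (subst Ty) auto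
    qed auto
    finally have H: "(?T has_sum c * (1 / (1 - z))) UNIV" .
    have "c * (1 / (1 - z)) = complex_of_real (1 / d) *
          (complex_of_real (exp (- x / d)) /
             (1 - exp (- (complex_of_real \<alpha> * (complex_of_real (1 / d) + 2 * complex_of_real pi * \<i> * complex_of_real \<xi>)))))"
      unfolding c_def z_def w_def exp_of_real by simp
    then show ?thesis using H by simp
  next
    case False
    with d have dn: "d < 0" by simp
    define r where "r = exp (complex_of_real \<alpha> * w)"
    have nr: "norm r < 1" using dn \<alpha> by (simp add: r_def w_def divide_pos_neg)
    have rz: "r * z = 1" by (simp add: r_def z_def exp_add[symmetric])
    have "((\<lambda>n. - c * r ^ n) has_sum (- c * (r / (1 - r)))) {1..}"
      by (intro has_sum_cmult_right has_sum_geometric_from_1 nr)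
    also have "?this \<longleftrightarrow> (?T has_sum (- c * (r / (1 - r)))) {k. k \<ge> 1}"
    proof (rule has_sum_reindex_bij_witness[of _ "\<lambda>k. nat k" "\<lambda>n. int n"])
      fix n :: nat assume "n \<in> {1..}"
      then have n1: "n \<ge> 1" by simp
      have ex: "complex_of_real (- (x - \<alpha> * real_of_int (int n)) / d) +
          2 * complex_of_real pi * \<i> * complex_of_real (\<alpha> * real_of_int (int n) * \<xi>)
          = complex_of_real (- x / d) + of_nat n * (complex_of_real \<alpha> * w)"
        using dn by (simp add: w_def field_simps)
      have "x - \<alpha> * real n < 0"
      proof -
        have "\<alpha> * real n \<ge> \<alpha> * 1" using n1 \<alpha> by (intro mult_left_mono) auto
        then show ?thesis using x by linarith
      qed
      then have cond: "x - \<alpha> * real_of_int (int n) \<in> (if 0 < d then {0..} else {..<0})"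
        using dn by simp
      have "?T (int n) = complex_of_real (sgn d / d) * exp (complex_of_real (- (x - \<alpha> * real_of_int (int n)) / d) +
          2 * complex_of_real pi * \<i> * complex_of_real (\<alpha> * real_of_int (int n) * \<xi>))"
        using Ty[of "int n", unfolded if_P[OF cond]] .
      also have "\<dots> = complex_of_real (- 1 / d) * exp (complex_of_real (- x / d) + of_nat n * (complex_of_real \<alpha> * w))"
        by (subst ex) (simp add: dn)
      also have "\<dots> = - c * r ^ n"
        by (simp only: c_def r_def exp_add exp_of_nat_mult mult.assoc) simp
      finally show "?T (int n) = - c * r ^ n" .
    qed auto
    also have "\<dots> \<longleftrightarrow> (?T has_sum (- c * (r / (1 - r)))) UNIV"
    proof (rule has_sum_cong_neutral)
      fix k :: int assume "k \<in> UNIV - {k. k \<ge> 1}"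
      then have "k \<le> 0" by simp
      then have "\<alpha> * real_of_int k \<le> 0" using \<alpha> by (simp add: mult_nonneg_nonpos)
      then have "\<not> (x - \<alpha> * real_of_int k < 0)" using x by linarith
      then show "?T k = 0" using dn by (subst Ty) auto
    qed auto
    also have "- c * (r / (1 - r)) = c * (1 / (1 - z))"
    proof -
      have r0: "r \<noteq> 0" by (simp add: r_def)
      have r1: "r \<noteq> 1" using nr by auto
      have zr: "z = 1 / r" using rz r0 by (simp add: field_simps)
      have e: "1 - z = (r - 1) / r" unfolding zr using r0 by (simp add: field_simps)
      have r1': "r - 1 \<noteq> 0" "1 - r \<noteq> 0" using r1 by auto
      show ?thesis unfolding e using r0 r1' by (simp add: field_simps)
    qed
    finally have H: "(?T has_sum c * (1 / (1 - z))) UNIV" .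
    have "c * (1 / (1 - z)) = complex_of_real (1 / d) *
          (complex_of_real (exp (- x / d)) /
             (1 - exp (- (complex_of_real \<alpha> * (complex_of_real (1 / d) + 2 * complex_of_real pi * \<i> * complex_of_real \<xi>)))))"
      unfolding c_def z_def w_def exp_of_real by simp
    then show ?thesis using H by simp
  qed
qed


lemma has_sum_sum_fin:
  fixes f :: "nat \<Rightarrow> 'a \<Rightarrow> complex"
  assumes "finite I" "\<And>i. i \<in> I \<Longrightarrow> (f i has_sum s i) A"
  shows "((\<lambda>x. \<Sum>i\<in>I. f i x) has_sum (\<Sum>i\<in>I. s i)) A"
  using assms
proof (induction I rule: finite_induct)
  case empty
  then show ?case by simp
next
  case (insert j I)
  then show ?case by (simp add: has_sum_add)
qed

lemma ae_cont_zero: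
  fixes F :: "real \<Rightarrow> complex"
  assumes F: "continuous_on UNIV F" and U: "open U"
    and ae: "AE y in lborel. y \<in> U \<longrightarrow> F y = 0"
    and x: "x \<in> closure U"
  shows "F x = 0"
proof -
  have U0: "F y = 0" if y: "y \<in> U" for y
  proof (rule ccontr)
    assume ne: "F y \<noteq> 0"
    have "open (F -` (- {0}))" by (rule open_vimage[OF _ F]) auto
    then have "open (U \<inter> F -` (- {0}))" using U by auto
    moreover have "y \<in> U \<inter> F -` (- {0})" using y ne by auto
    ultimately obtain e where e: "e > 0" "ball y e \<subseteq> U \<inter> F -` (- {0})"
      by (meson openE)
    from ae obtain N where N: "{x \<in> space lborel. \<not> (x \<in> U \<longrightarrow> F x = 0)} \<subseteq> N" "emeasure lborel N = 0" "N \<in> sets lborel"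
      by (rule AE_E)
    have "{y - e <..< y + e} \<subseteq> N"
    proof
      fix z assume "z \<in> {y - e <..< y + e}"
      then have "z \<in> ball y e" by (auto simp: dist_real_def)
      then have "z \<in> U" "F z \<noteq> 0" using e(2) by auto
      then show "z \<in> N" using N(1) by auto
    qed
    then have "emeasure lborel {y - e <..< y + e} \<le> emeasure lborel N"
      using N(3) by (intro emeasure_mono) auto
    moreover have "emeasure lborel {y - e <..< y + e} = ennreal (2 * e)"
      using e by simp
    ultimately show False using N(2) e by simp
  qed
  show ?thesis
    using continuous_constant_on_closure[of U F 0 x] F U0 x
    by (auto intro: continuous_on_subset)
qed

lemma integrable_mult_E:
  fixes f :: "real \<Rightarrow> complex"
  assumes f: "integrable lborel f"
  shows "integrable lborel (\<lambda>x. f x * exp (- (2 * complex_of_real pi * \<i> * complex_of_real x * complex_of_real \<xi>)))"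
proof (rule Bochner_Integration.integrable_bound[OF f])
  have [measurable]: "f \<in> borel_measurable lborel" using f by auto
  show "(\<lambda>x. f x * exp (- (2 * complex_of_real pi * \<i> * complex_of_real x * complex_of_real \<xi>))) \<in> borel_measurable lborel"
    by measurable
qed (auto simp: norm_mult)

theorem corollary1:
  fixes m :: nat and \<delta> :: "nat \<Rightarrow> real" and g :: "real \<Rightarrow> complex" and \<alpha> :: real
  assumes m: "m \<ge> 2"
    and \<delta>_nz: "\<And>k. k \<in> {1..m} \<Longrightarrow> \<delta> k \<noteq> 0"
    and \<delta>_inj: "inj_on \<delta> {1..m}"
    and g_int: "integrable lborel g"
    and g_cont: "continuous_on UNIV g"
    and g_hat: "\<And>\<xi>. fourier_transform g \<xi> =
        (\<Prod>k\<in>{1..m}. inverse (1 + 2 * complex_of_real pi * \<i> * complex_of_real (\<delta> k * \<xi>)))"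
    and \<alpha>: "\<alpha> > 0"
  shows "\<forall>x \<in> {0..<\<alpha>}. \<forall>\<xi> \<in> {0..<1/\<alpha>}.
     zak_transform \<alpha> g x \<xi> =
       (\<Sum>i\<in>{1..m}. complex_of_real (1 / \<delta> i) *
          (complex_of_real (exp (- x / \<delta> i)) /
             (1 - exp (- (complex_of_real \<alpha> * (complex_of_real (1 / \<delta> i) + 2 * complex_of_real pi * \<i> * complex_of_real \<xi>))))) *
          (\<Prod>k\<in>{1..m} - {i}. inverse (1 - complex_of_real (\<delta> k / \<delta> i))))"
proof -
  define C where "C i = (\<Prod>k\<in>{1..m} - {i}. inverse (1 - complex_of_real (\<delta> k / \<delta> i)))" for i
  define h where "h y = (\<Sum>i\<in>{1..m}. C i * gz (\<delta> i) y)" for y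
  have gzi: "integrable lborel (\<lambda>x. gz (\<delta> i) x * exp (- (2 * complex_of_real pi * \<i> * complex_of_real x * complex_of_real \<xi>)))"
    if "i \<in> {1..m}" for i \<xi>
    using ft_gz(1)[OF \<delta>_nz[OF that]] .
  have gzi0: "integrable lborel (gz (\<delta> i))" if "i \<in> {1..m}" for i
    using gzi[OF that, of 0] by simp
  have hi: "integrable lborel h"
    unfolding h_def using gzi0 by (intro Bochner_Integration.integrable_sum Bochner_Integration.integrable_mult_right) auto
  have hE: "fourier_transform h \<xi> =
        (\<Prod>k\<in>{1..m}. inverse (1 + 2 * complex_of_real pi * \<i> * complex_of_real (\<delta> k * \<xi>)))" for \<xi>
  proof -
    have "fourier_transform h \<xi> = (LINT x|lborel. (\<Sum>i\<in>{1..m}. C i * (gz (\<delta> i) x * exp (- (2 * complex_of_real pi * \<i> * complex_of_real x * complex_of_real \<xi>)))))"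
      unfolding fourier_transform_def h_def
      by (rule Bochner_Integration.integral_cong) (auto simp: sum_distrib_right mult.assoc)
    also have "\<dots> = (\<Sum>i\<in>{1..m}. C i * (LINT x|lborel. gz (\<delta> i) x * exp (- (2 * complex_of_real pi * \<i> * complex_of_real x * complex_of_real \<xi>))))"
      using gzi by (subst Bochner_Integration.integral_sum) (auto intro: Bochner_Integration.integrable_mult_right)
    also have "\<dots> = (\<Sum>i\<in>{1..m}. C i * inverse (1 + 2 * complex_of_real pi * \<i> * complex_of_real (\<delta> i * \<xi>)))"
      using ft_gz(2)[OF \<delta>_nz] by simp
    also have "\<dots> = (\<Prod>k\<in>{1..m}. inverse (1 + 2 * complex_of_real pi * \<i> * complex_of_real (\<delta> k * \<xi>)))"
    proof -
      define a where "a = 2 * complex_of_real pi * \<i> * complex_of_real \<xi>"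
      have ne: "{1..m} \<noteq> {}" using m by auto
      have dnz: "\<forall>k\<in>{1..m}. complex_of_real (\<delta> k) \<noteq> 0" using \<delta>_nz by auto
      have dinj: "inj_on (\<lambda>k. complex_of_real (\<delta> k)) {1..m}"
        using \<delta>_inj by (metis (mono_tags, lifting) inj_on_def of_real_eq_iff)
      have e1: "\<And>k. 1 + a * complex_of_real (\<delta> k) = 1 + 2 * complex_of_real pi * \<i> * complex_of_real (\<delta> k * \<xi>)"
        by (simp add: a_def ac_simps)
      have e2: "\<And>k i. complex_of_real (\<delta> k) / complex_of_real (\<delta> i) = complex_of_real (\<delta> k / \<delta> i)"
        by simp
      have nz: "\<forall>k\<in>{1..m}. 1 + a * complex_of_real (\<delta> k) \<noteq> 0"
      proof
        fix k
        have "Re (1 + a * complex_of_real (\<delta> k)) = 1" by (simp add: a_def)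
        then show "1 + a * complex_of_real (\<delta> k) \<noteq> 0" by (metis one_neq_zero zero_complex.sel(1))
      qed
      have "(\<Prod>k\<in>{1..m}. 1 / (1 + a * complex_of_real (\<delta> k))) =
          (\<Sum>i\<in>{1..m}. (\<Prod>k\<in>{1..m} - {i}. 1 / (1 - complex_of_real (\<delta> k) / complex_of_real (\<delta> i))) / (1 + a * complex_of_real (\<delta> i)))"
        using partial_fractions[OF _ ne dnz dinj] nz by blast
      then show ?thesis unfolding e1 e2
        by (simp add: C_def inverse_eq_divide)
    qed
    finally show ?thesis .
  qed
  have ae: "AE x in lborel. g x - h x = 0"
  proof (rule fourier_unique)
    show "integrable lborel (\<lambda>x. g x - h x)" using g_int hi by auto
    fix \<xi>
    have "fourier_transform (\<lambda>x. g x - h x) \<xi> = fourier_transform g \<xi> - fourier_transform h \<xi>"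
      unfolding fourier_transform_def
      using integrable_mult_E[OF g_int, of \<xi>] integrable_mult_E[OF hi, of \<xi>]
      by (subst Bochner_Integration.integral_diff[symmetric]) (auto simp: left_diff_distrib)
    then show "fourier_transform (\<lambda>x. g x - h x) \<xi> = 0" using g_hat hE by simp
  qed
  define hP where "hP y = (\<Sum>i\<in>{1..m}. C i * (if 0 < \<delta> i then complex_of_real (exp (- y / \<delta> i) / \<delta> i) else 0))" for y
  define hN where "hN y = (\<Sum>i\<in>{1..m}. C i * (if 0 < \<delta> i then 0 else complex_of_real (- exp (- y / \<delta> i) / \<delta> i)))" for y
  have cP: "continuous_on UNIV hP"
    unfolding hP_def
  proof (intro continuous_on_sum continuous_on_mult continuous_on_const)
    fix i assume "i \<in> {1..m}"
    show "continuous_on UNIV (\<lambda>y. if 0 < \<delta> i then complex_of_real (exp (- y / \<delta> i) / \<delta> i) else 0)"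
      by (cases "0 < \<delta> i") (auto intro!: continuous_intros)
  qed
  have cN: "continuous_on UNIV hN"
    unfolding hN_def
  proof (intro continuous_on_sum continuous_on_mult continuous_on_const)
    fix i assume i: "i \<in> {1..m}"
    show "continuous_on UNIV (\<lambda>y. if 0 < \<delta> i then 0 else complex_of_real (- exp (- y / \<delta> i) / \<delta> i))"
      using \<delta>_nz[OF i] by (cases "0 < \<delta> i") (auto intro!: continuous_intros)
  qed
  have hPh: "h y = hP y" if "0 \<le> y" for y
    unfolding h_def hP_def using that by (intro sum.cong refl) (auto simp: gz_def)
  have hNh: "h y = hN y" if "y < 0" for y
    unfolding h_def hN_def using that by (intro sum.cong refl) (auto simp: gz_def)
  have gP: "g y - hP y = 0" if "0 \<le> y" for y
  proof (rule ae_cont_zero[where U="{0<..}"])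
    show "continuous_on UNIV (\<lambda>y. g y - hP y)" using g_cont cP by (intro continuous_on_diff)
    show "AE y in lborel. y \<in> {0<..} \<longrightarrow> g y - hP y = 0"
      using ae by eventually_elim (auto simp: hPh)
  qed (use that in auto)
  have gN: "g y - hN y = 0" if "y \<le> 0" for y
  proof (rule ae_cont_zero[where U="{..<0}"])
    show "continuous_on UNIV (\<lambda>y. g y - hN y)" using g_cont cN by (intro continuous_on_diff)
    show "AE y in lborel. y \<in> {..<0} \<longrightarrow> g y - hN y = 0"
      using ae by eventually_elim (auto simp: hNh)
  qed (use that in auto)
  have gh: "g y = h y" for y
  proof (cases "0 \<le> y")
    case True
    then show ?thesis using gP[OF True] hPh[OF True] by simp
  next
    case False
    then show ?thesis using gN[of y] hNh[of y] by simp
  qed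
  show ?thesis
  proof (intro ballI)
    fix x \<xi> assume x: "x \<in> {0..<\<alpha>}" and "\<xi> \<in> {0..<1/\<alpha>}"
    define Z where "Z i = complex_of_real (1 / \<delta> i) *
          (complex_of_real (exp (- x / \<delta> i)) /
             (1 - exp (- (complex_of_real \<alpha> * (complex_of_real (1 / \<delta> i) + 2 * complex_of_real pi * \<i> * complex_of_real \<xi>)))))" for i
    have "((\<lambda>k::int. \<Sum>i\<in>{1..m}. C i * (gz (\<delta> i) (x - \<alpha> * real_of_int k) *
        exp (2 * complex_of_real pi * \<i> * complex_of_real (\<alpha> * real_of_int k * \<xi>)))) has_sum
        (\<Sum>i\<in>{1..m}. C i * Z i)) UNIV"
      using x \<delta>_nz \<alpha> unfolding Z_def
      by (intro has_sum_sum_fin has_sum_cmult_right zak_gz) auto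
    then have "zak_transform \<alpha> g x \<xi> = (\<Sum>i\<in>{1..m}. C i * Z i)"
      unfolding zak_transform_def gh h_def
      by (intro infsumI) (simp add: sum_distrib_right mult.assoc)
    also have "\<dots> = (\<Sum>i\<in>{1..m}. Z i * C i)" by (simp add: mult.commute)
    finally show "zak_transform \<alpha> g x \<xi> =
       (\<Sum>i\<in>{1..m}. complex_of_real (1 / \<delta> i) *
          (complex_of_real (exp (- x / \<delta> i)) /
             (1 - exp (- (complex_of_real \<alpha> * (complex_of_real (1 / \<delta> i) + 2 * complex_of_real pi * \<i> * complex_of_real \<xi>))))) *
          (\<Prod>k\<in>{1..m} - {i}. inverse (1 - complex_of_real (\<delta> k / \<delta> i))))"
      unfolding Z_def C_def .
  qed
qed

end
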